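(* Let $K\ge L\ge T\ge 2$ be integers, let $\kappa,\lambda$ be the smallest non-negative integers such that $K+1+\kappa$ and $L+1+\lambda$ are coprime to $T-1$, and put $K^\star=K+1+\kappa$, $L^\star=L+1+\lambda$, $\bar T=T-1$, $q=K^\star L^\star+\bar T^2$. Let $x$ be a positive integer coprime to $q$ and $y\in\{0,\dots,q-1\}$ the unique integer with $x\bar T+yK^\star\equiv 0\pmod q$. Then every integer solution $(i,j)$ of $ix\equiv jy\pmod q$ is of the form $i=-a\bar T+bL^\star$, $j=aK^\star+b\bar T$ for some integers $a,b$. *)

theory Defs
  imports Main "HOL-Number_Theory.Cong"
begin

end

theory Submission
  imports Defs
begin

lemma cop_ex: assumes "2 \<le> T" shows "\<exists>k. coprime (K + 1 + k) (T - 1 :: nat)"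
proof (cases "T - 1")
  case 0
  then show ?thesis using assms by simp
next
  case (Suc m)
  have "K + 1 + (m * (K + 1) + 1) = (T - 1) * (K + 1) + 1" using Suc by (simp add: algebra_simps)
  moreover have "coprime ((T - 1) * (K + 1) + 1) (T - 1)"
    by (metis coprime_add_one_left coprime_mult_left_iff coprime_commute gcd_add_mult coprime_iff_gcd_eq_1 mult.commute)
  ultimately show ?thesis by metis
qed

theorem lemma5:
  fixes K L T kappa lambda Ks Ls Tb q :: nat and x y i j :: int
  assumes "2 \<le> T" and "T \<le> L" and "L \<le> K"
    and "kappa = (LEAST k::nat. coprime (K + 1 + k) (T - 1))"
    and "lambda = (LEAST k::nat. coprime (L + 1 + k) (T - 1))"
    and "Ks = K + 1 + kappa" and "Ls = L + 1 + lambda" and "Tb = T - 1"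
    and "q = Ks * Ls + Tb ^ 2"
    and "x > 0" and "coprime x (int q)"
    and "0 \<le> y" and "y < int q"
    and "[x * int Tb + y * int Ks = 0] (mod int q)"
    and "[i * x = j * y] (mod int q)"
  shows "\<exists>a b :: int. i = - a * int Tb + b * int Ls \<and> j = a * int Ks + b * int Tb"
proof -
  have c1: "coprime Ks Tb"
    using assms(4,6,8) LeastI_ex[of "\<lambda>k. coprime (K + 1 + k) (T - 1)"] cop_ex[OF assms(1)] by blast
  have c1': "coprime Ks (Tb ^ 2)" using c1 by simp
  have "gcd Ks (Ls * Ks + Tb ^ 2) = gcd Ks (Tb ^ 2)" by (rule gcd_add_mult)
  hence "coprime Ks q" using c1' assms(9) by (simp add: coprime_iff_gcd_eq_1 mult.commute)
  hence cq: "coprime (int Ks) (int q)" by simp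
  have h1: "int q dvd (x * int Tb + y * int Ks)"
    using assms(14) by (simp add: cong_0_iff)
  have h2: "int q dvd (i * x - j * y)"
    using assms(15) by (simp add: cong_iff_dvd_diff)
  have "x * (int Ks * i + int Tb * j) = int Ks * (i * x - j * y) + j * (x * int Tb + y * int Ks)"
    by (simp add: algebra_simps)
  hence "int q dvd x * (int Ks * i + int Tb * j)" using h1 h2 by simp
  hence "int q dvd (int Ks * i + int Tb * j)"
    using assms(11) by (metis coprime_dvd_mult_right_iff coprime_commute)
  then obtain b where b: "int Ks * i + int Tb * j = int q * b" by blast
  have qe: "int q = int Ks * int Ls + int Tb ^ 2" using assms(9) by simp
  have "int Ks * (int Ls * j - int Tb * i) = int Ks * int Ls * j - int Tb * (int Ks * i + int Tb * j) + int Tb ^ 2 * j"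
    by (simp add: algebra_simps power2_eq_square)
  also have "\<dots> = int q * (j - int Tb * b)" unfolding b qe by (simp add: algebra_simps)
  finally have "int Ks * (int Ls * j - int Tb * i) = int q * (j - int Tb * b)" .
  hence "int q dvd int Ks * (int Ls * j - int Tb * i)" by simp
  hence "int q dvd (int Ls * j - int Tb * i)"
    using cq by (metis coprime_dvd_mult_right_iff coprime_commute)
  then obtain a where a: "int Ls * j - int Tb * i = int q * a" by blast
  have "q > 0" using assms(6,7,9) by simp
  hence qpos: "int q > 0" by simp
  have "int q * (- a * int Tb + b * int Ls) = - int Tb * (int q * a) + int Ls * (int q * b)"
    by (simp add: algebra_simps)
  also have "\<dots> = - int Tb * (int Ls * j - int Tb * i) + int Ls * (int Ks * i + int Tb * j)"
    by (simp only: a b)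
  also have "\<dots> = int q * i" by (simp add: qe algebra_simps power2_eq_square)
  finally have e1: "int q * (- a * int Tb + b * int Ls) = int q * i" .
  have "int q * (a * int Ks + b * int Tb) = int Ks * (int q * a) + int Tb * (int q * b)"
    by (simp add: algebra_simps)
  also have "\<dots> = int Ks * (int Ls * j - int Tb * i) + int Tb * (int Ks * i + int Tb * j)"
    by (simp only: a b)
  also have "\<dots> = int q * j" by (simp add: qe algebra_simps power2_eq_square)
  finally have e2: "int q * (a * int Ks + b * int Tb) = int q * j" .
  show ?thesis using qpos e1 e2 by (intro exI[of _ a] exI[of _ b]) simp
qed

end
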